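(* Let $X\in\sigma\mathcal F$ and $F\in\mathsf{age}(X)$. Then $\mathsf{rk}_X(F)=\infty$ if and only if Player II has a winning strategy in the rank game on $X$ starting from $F$.
   Context: Let $\mathcal L$ be a countable relational language without constants and $\mathcal F$ a hereditary, isomorphism-closed class of finite $\mathcal L$-structures. $\sigma\mathcal F$ is the class of countable structures isomorphic to unions of chains in $\mathcal F$; $\mathsf{age}(X)$ is the set of finite (induced) substructures of $X$. For $A\le B$, $B$ is a prime extension of $A$ if $|B\setminus A|=1$; a realization of $B$ in $X$ (where $A\le X$) is $C\le X$ with $A\le C$ and an isomorphism $B\to C$ fixing $A$ pointwise. For $F\in\mathsf{age}(X)$ define by recursion: $\mathsf{rk}_X(F)\ge0$ always; $\mathsf{rk}_X(F)\ge\alpha+1$ iff every prime extension $B\in\mathcal F$ of $F$ has a realization $C$ in $X$ with $\mathsf{rk}_X(C)\ge\alpha$; for limit $\alpha$, $\mathsf{rk}_X(F)\ge\alpha$ iff $\mathsf{rk}_X(F)\ge\beta$ for all $\beta<\alpha$. $\mathsf{rk}_X(F)=\sup\{\alpha:\mathsf{rk}_X(F)\ge\alpha\}$, and $\mathsf{rk}_X(F)=\infty$ if $\mathsf{rk}_X(F)\ge\alpha$ for every ordinal $\alpha$. The rank game on $X$ starting from $F$: players I and II play $\omega$ rounds; the position at round $n$ is $F_n\in\mathsf{age}(X)$ with $F_0=F$. In round $n$, I chooses a prime extension $B\in\mathcal F$ of $F_n$, and II responds with a realization $C$ of $B$ in $X$, setting $F_{n+1}=C$. II loses at round $n$ if no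 realization exists; II wins if the game lasts all $\omega$ rounds. *)

theory Defs
  imports Main "HOL-Library.Countable" "HOL-Library.Countable_Set"
begin

text \<open>A structure is a pair (universe, interpretation);
elements are drawn from nat (so every structure is countable, and every finite structure has
isomorphic copies inside nat).\<close>

type_synonym 'r struct = "nat set \<times> ('r \<Rightarrow> nat list \<Rightarrow> bool)"

definition univ :: "'r struct \<Rightarrow> nat set" where
  "univ S = fst S"

definition rel :: "'r struct \<Rightarrow> 'r \<Rightarrow> nat list \<Rightarrow> bool" where
  "rel S = snd S"

definition wf_struct :: "('r \<Rightarrow> nat) \<Rightarrow> 'r struct \<Rightarrow> bool" where
  "wf_struct ar S \<longleftrightarrow> (\<forall>r xs. rel S r xs \<longrightarrow> length xs = ar r \<and> set xs \<subseteq> univ S)"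

definition substr :: "('r \<Rightarrow> nat) \<Rightarrow> 'r struct \<Rightarrow> 'r struct \<Rightarrow> bool" where
  "substr ar A B \<longleftrightarrow> wf_struct ar A \<and> wf_struct ar B \<and> univ A \<subseteq> univ B \<and>
     (\<forall>r xs. set xs \<subseteq> univ A \<longrightarrow> (rel A r xs \<longleftrightarrow> rel B r xs))"

definition iso :: "('r \<Rightarrow> nat) \<Rightarrow> (nat \<Rightarrow> nat) \<Rightarrow> 'r struct \<Rightarrow> 'r struct \<Rightarrow> bool" where
  "iso ar f A B \<longleftrightarrow> wf_struct ar A \<and> wf_struct ar B \<and> bij_betw f (univ A) (univ B) \<and>
     (\<forall>r xs. set xs \<subseteq> univ A \<longrightarrow> (rel A r xs \<longleftrightarrow> rel B r (map f xs)))"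

definition good_class :: "('r \<Rightarrow> nat) \<Rightarrow> 'r struct set \<Rightarrow> bool" where
  "good_class ar K \<longleftrightarrow>
     (\<forall>S\<in>K. wf_struct ar S \<and> finite (univ S)) \<and>
     (\<forall>S T. S \<in> K \<longrightarrow> substr ar T S \<longrightarrow> T \<in> K) \<and>
     (\<forall>S T f. S \<in> K \<longrightarrow> iso ar f S T \<longrightarrow> T \<in> K)"

definition union_str :: "'r struct set \<Rightarrow> 'r struct" where
  "union_str C = (\<Union>S\<in>C. univ S, \<lambda>r xs. \<exists>S\<in>C. rel S r xs)"

definition is_chain :: "('r \<Rightarrow> nat) \<Rightarrow> 'r struct set \<Rightarrow> bool" where
  "is_chain ar C \<longleftrightarrow> (\<forall>S\<in>C. \<forall>T\<in>C. substr ar S T \<or> substr ar T S)"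

definition sigma_class :: "('r \<Rightarrow> nat) \<Rightarrow> 'r struct set \<Rightarrow> 'r struct set" where
  "sigma_class ar K = {X. wf_struct ar X \<and>
     (\<exists>C f. C \<subseteq> K \<and> is_chain ar C \<and> iso ar f (union_str C) X)}"

definition age :: "('r \<Rightarrow> nat) \<Rightarrow> 'r struct \<Rightarrow> 'r struct set" where
  "age ar X = {F. substr ar F X \<and> finite (univ F)}"

definition prime_ext :: "('r \<Rightarrow> nat) \<Rightarrow> 'r struct set \<Rightarrow> 'r struct \<Rightarrow> 'r struct \<Rightarrow> bool" where
  "prime_ext ar K A B \<longleftrightarrow> B \<in> K \<and> substr ar A B \<and> card (univ B - univ A) = 1"

definition realization ::
  "('r \<Rightarrow> nat) \<Rightarrow> 'r struct \<Rightarrow> 'r struct \<Rightarrow> 'r struct \<Rightarrow> 'r struct \<Rightarrow> bool" where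
  "realization ar X A B C \<longleftrightarrow> substr ar C X \<and> substr ar A C \<and>
     (\<exists>f. iso ar f B C \<and> (\<forall>x\<in>univ A. f x = x))"

text \<open>Ordinals are represented by elements of a well-ordered type 'o.
is_pred \<beta> \<alpha> means \<alpha> = \<beta> + 1.\<close>
definition is_pred :: "'o::wellorder \<Rightarrow> 'o \<Rightarrow> bool" where
  "is_pred \<beta> \<alpha> \<longleftrightarrow> \<beta> < \<alpha> \<and> (\<forall>\<gamma><\<alpha>. \<gamma> \<le> \<beta>)"

lemma the_pred_less:
  assumes "\<exists>\<beta>. is_pred \<beta> \<alpha>" shows "(THE \<beta>. is_pred \<beta> \<alpha>) < \<alpha>"
proof -
  obtain \<beta> where b: "is_pred \<beta> \<alpha>" using assms by blast
  have "\<And>\<gamma>. is_pred \<gamma> \<alpha> \<Longrightarrow> \<gamma> = \<beta>"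
    using b unfolding is_pred_def by (meson antisym)
  hence "(THE \<beta>. is_pred \<beta> \<alpha>) = \<beta>" using b by (rule the_equality[rotated])
  thus ?thesis using b unfolding is_pred_def by simp
qed

text \<open>rk_ge ar K X F \<alpha> means rk_X(F) \<ge> \<alpha>: clause for 0 (vacuously true, as 0 has no
predecessor and nothing below it), successor clause, and limit clause.\<close>
function rk_ge :: "('r \<Rightarrow> nat) \<Rightarrow> 'r struct set \<Rightarrow> 'r struct \<Rightarrow> 'r struct \<Rightarrow> 'o::wellorder \<Rightarrow> bool"
  where
  "rk_ge ar K X F \<alpha> =
    (if (\<exists>\<beta>. is_pred \<beta> \<alpha>)
     then (\<forall>B. prime_ext ar K F B \<longrightarrow>
             (\<exists>C. realization ar X F B C \<and> rk_ge ar K X C (THE \<beta>. is_pred \<beta> \<alpha>)))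
     else (\<forall>\<beta>. \<beta> < \<alpha> \<longrightarrow> rk_ge ar K X F \<beta>))"
  by auto
termination
  by (relation "inv_image {(x, y). x < y} (\<lambda>(ar, K, X, F, \<alpha>). \<alpha>)")
     (auto simp: the_pred_less wf)

definition rk_infinite :: "('r \<Rightarrow> nat) \<Rightarrow> 'r struct set \<Rightarrow> 'r struct \<Rightarrow> 'r struct \<Rightarrow> 'o::wellorder itself \<Rightarrow> bool" where
  "rk_infinite ar K X F _ \<longleftrightarrow> (\<forall>\<alpha>::'o. rk_ge ar K X F \<alpha>)"

text \<open>A strategy for Player II maps the list of Player I's moves so far [B_0,...,B_n] to a
response C_n. Positions along a play: F_0 = F, F_(n+1) = response to [B_0,...,B_n].\<close>
type_synonym 'r strategy = "'r struct list \<Rightarrow> 'r struct"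

definition play_pos :: "'r struct \<Rightarrow> 'r strategy \<Rightarrow> (nat \<Rightarrow> 'r struct) \<Rightarrow> nat \<Rightarrow> 'r struct" where
  "play_pos F \<sigma> bs n = (if n = 0 then F else \<sigma> (map bs [0..<n]))"

definition II_winning :: "('r \<Rightarrow> nat) \<Rightarrow> 'r struct set \<Rightarrow> 'r struct \<Rightarrow> 'r struct \<Rightarrow> 'r strategy \<Rightarrow> bool" where
  "II_winning ar K X F \<sigma> \<longleftrightarrow>
     (\<forall>bs n. (\<forall>k\<le>n. prime_ext ar K (play_pos F \<sigma> bs k) (bs k)) \<longrightarrow>
        realization ar X (play_pos F \<sigma> bs n) (bs n) (play_pos F \<sigma> bs (Suc n)))"

definition II_has_winning_strategy :: "('r \<Rightarrow> nat) \<Rightarrow> 'r struct set \<Rightarrow> 'r struct \<Rightarrow> 'r struct \<Rightarrow> bool" where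
  "II_has_winning_strategy ar K X F \<longleftrightarrow> (\<exists>\<sigma>. II_winning ar K X F \<sigma>)"

end

theory Submission
  imports Defs
begin

declare rk_ge.simps[simp del]

lemma pred_unique:
  assumes b: "is_pred \<beta> \<alpha>" shows "(THE \<beta>. is_pred \<beta> \<alpha>) = \<beta>"
proof -
  have "\<And>\<gamma>. is_pred \<gamma> \<alpha> \<Longrightarrow> \<gamma> = \<beta>"
    using b unfolding is_pred_def by (meson antisym)
  thus ?thesis using b by (rule the_equality[rotated])
qed

lemma rk_mono_lt:
  fixes \<alpha> \<beta> :: "'o::wellorder"
  shows "\<beta> < \<alpha> \<Longrightarrow> rk_ge ar K X C \<alpha> \<Longrightarrow> rk_ge ar K X C \<beta>"
proof (induction \<alpha> arbitrary: \<beta> C rule: less_induct)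
  case (less \<alpha>)
  note IH = less.IH
  show ?case
  proof (cases "\<exists>a. is_pred a \<alpha>")
    case False
    with less.prems show ?thesis by (subst (asm) rk_ge.simps) auto
  next
    case True
    then obtain a where a: "is_pred a \<alpha>" by blast
    have the: "(THE b. is_pred b \<alpha>) = a" using a by (rule pred_unique)
    have ext: "\<forall>B. prime_ext ar K C B \<longrightarrow> (\<exists>C'. realization ar X C B C' \<and> rk_ge ar K X C' a)"
      using less.prems(2) True the by (subst (asm) rk_ge.simps) auto
    have aa: "a < \<alpha>" using a unfolding is_pred_def by auto
    have "\<beta> \<le> a" using a less.prems(1) unfolding is_pred_def by auto
    then show ?thesis using ext
    proof (induction \<beta> arbitrary: C rule: less_induct)
      case (less \<beta>)
      show ?case
      proof (cases "\<exists>b. is_pred b \<beta>")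
        case True
        then obtain b where b: "is_pred b \<beta>" by blast
        have theb: "(THE c. is_pred c \<beta>) = b" using b by (rule pred_unique)
        have ba: "b < a" using b less.prems(1) unfolding is_pred_def by auto
        show ?thesis
        proof (subst rk_ge.simps, simp only: True theb if_True, intro allI impI)
          fix B assume "prime_ext ar K C B"
          then obtain C' where "realization ar X C B C'" "rk_ge ar K X C' a"
            using less.prems(2) by blast
          moreover have "rk_ge ar K X C' b" using IH[OF aa ba \<open>rk_ge ar K X C' a\<close>] .
          ultimately show "\<exists>C'. realization ar X C B C' \<and> rk_ge ar K X C' b" by blast
        qed
      next
        case False
        show ?thesis
        proof (subst rk_ge.simps, simp only: False if_False, intro allI impI)
          fix \<gamma> assume "\<gamma> < \<beta>"
          then show "rk_ge ar K X C \<gamma>" using less.IH less.prems by auto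
        qed
      qed
    qed
  qed
qed

lemma rk_mono:
  fixes \<alpha> \<beta> :: "'o::wellorder"
  shows "rk_ge ar K X C \<alpha> \<Longrightarrow> \<beta> \<le> \<alpha> \<Longrightarrow> rk_ge ar K X C \<beta>"
  using rk_mono_lt by (metis order_le_less)

definition succ_o :: "'o::wellorder \<Rightarrow> 'o" where
  "succ_o d = (LEAST x. d < x)"

lemma succ_pred:
  fixes d x :: "'o::wellorder"
  assumes "d < x" shows "is_pred d (succ_o d)"
  unfolding is_pred_def succ_o_def
proof
  show "d < (LEAST x. d < x)" using assms by (rule LeastI)
  show "\<forall>\<gamma><(LEAST x. d < x). \<gamma> \<le> d"
    using not_less_Least by (metis not_le)
qed

lemma age_countable: "countable (age ar X)"
proof (rule countable_image_inj_on)
  show "countable (univ ` age ar X)"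
    by (rule countable_subset[OF _ countable_Collect_finite]) (auto simp: age_def)
  show "inj_on univ (age ar X)"
  proof (rule inj_onI)
    fix A B assume A: "A \<in> age ar X" and B: "B \<in> age ar X" and u: "univ A = univ B"
    have "\<And>r xs. rel A r xs = rel B r xs"
    proof -
      fix r xs
      have A': "substr ar A X" and B': "substr ar B X" using A B unfolding age_def by auto
      have wa: "\<forall>r xs. rel A r xs \<longrightarrow> set xs \<subseteq> univ A"
        using A' unfolding substr_def wf_struct_def by blast
      have wb: "\<forall>r xs. rel B r xs \<longrightarrow> set xs \<subseteq> univ B"
        using B' unfolding substr_def wf_struct_def by blast
      have sa: "\<forall>r xs. set xs \<subseteq> univ A \<longrightarrow> rel A r xs = rel X r xs"
        using A' unfolding substr_def by simp
      have sb: "\<forall>r xs. set xs \<subseteq> univ B \<longrightarrow> rel B r xs = rel X r xs"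
        using B' unfolding substr_def by simp
      show "rel A r xs = rel B r xs" using wa wb sa sb u by metis
    qed
    hence "snd A = snd B" unfolding rel_def by blast
    moreover have "fst A = fst B" using u unfolding univ_def .
    ultimately show "A = B" by (simp add: prod_eq_iff)
  qed
qed


lemma map_take_aux:
  "k \<le> length h \<Longrightarrow> map (\<lambda>i. if i < length h then h ! i else x) [0..<k] = take k h"
  by (rule nth_equalityI) auto

lemma win_imp_rk:
  assumes W: "II_winning ar K X F \<sigma>"
  shows "rk_ge ar K X F (\<alpha>::'o::wellorder)"
proof -
  define P where "P l = (if l = [] then F else \<sigma> l)" for l
  have key: "\<forall>k<length h. prime_ext ar K (P (take k h)) (h!k) \<Longrightarrow> rk_ge ar K X (P h) \<alpha>"
    for h and \<alpha> :: 'o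
  proof (induction \<alpha> arbitrary: h rule: less_induct)
    case (less \<alpha>)
    show ?case
    proof (cases "\<exists>a. is_pred a \<alpha>")
      case False
      show ?thesis
        by (subst rk_ge.simps, simp only: False if_False) (use less in auto)
    next
      case True
      then obtain a where a: "is_pred a \<alpha>" by blast
      have the: "(THE b. is_pred b \<alpha>) = a" using a by (rule pred_unique)
      have aa: "a < \<alpha>" using a unfolding is_pred_def by auto
      show ?thesis
      proof (subst rk_ge.simps, simp only: True the if_True, intro allI impI)
        fix B assume pB: "prime_ext ar K (P h) B"
        define h' where "h' = h @ [B]"
        have leg: "\<forall>k<length h'. prime_ext ar K (P (take k h')) (h'!k)"
        proof (intro allI impI)
          fix k assume "k < length h'"
          then consider "k < length h" | "k = length h" unfolding h'_def by fastforce
          then show "prime_ext ar K (P (take k h')) (h'!k)"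
          proof cases
            case 1 then show ?thesis using less.prems unfolding h'_def by (auto simp: nth_append)
          next
            case 2 then show ?thesis using pB unfolding h'_def by auto
          qed
        qed
        define bs where "bs = (\<lambda>i. if i < length h' then h' ! i else B)"
        have pp: "play_pos F \<sigma> bs k = P (take k h')" if "k \<le> length h'" for k
          using map_take_aux[OF that, of B] that
          unfolding play_pos_def P_def bs_def by (auto simp: h'_def)
        have "\<forall>k\<le>length h. prime_ext ar K (play_pos F \<sigma> bs k) (bs k)"
        proof (intro allI impI)
          fix k assume "k \<le> length h"
          hence "k < length h'" unfolding h'_def by auto
          thus "prime_ext ar K (play_pos F \<sigma> bs k) (bs k)"
            using leg pp[of k] unfolding bs_def by auto
        qed
        hence "realization ar X (play_pos F \<sigma> bs (length h)) (bs (length h))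
                 (play_pos F \<sigma> bs (Suc (length h)))"
          using W unfolding II_winning_def by blast
        moreover have "play_pos F \<sigma> bs (length h) = P h"
          using pp[of "length h"] unfolding h'_def by auto
        moreover have "play_pos F \<sigma> bs (Suc (length h)) = P h'"
          using pp[of "Suc (length h)"] unfolding h'_def by auto
        moreover have "bs (length h) = B" unfolding bs_def h'_def by auto
        ultimately have r: "realization ar X (P h) B (P h')" by simp
        have "rk_ge ar K X (P h') a" using less.IH[OF aa leg] .
        with r show "\<exists>C. realization ar X (P h) B C \<and> rk_ge ar K X C a" by blast
      qed
    qed
  qed
  have "rk_ge ar K X (P []) \<alpha>" by (rule key) simp
  thus ?thesis unfolding P_def by simp
qed


fun gpos :: "('r \<Rightarrow> nat) \<Rightarrow> 'r struct \<Rightarrow> 'r struct set \<Rightarrow> 'r struct \<Rightarrow> 'r struct list \<Rightarrow> 'r struct" where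
  "gpos ar X S F [] = F"
| "gpos ar X S F (B # h) = (SOME C. realization ar X (gpos ar X S F h) B C \<and> C \<in> S)"

lemma closed_imp_win:
  assumes FS: "F \<in> S"
    and cl: "\<And>C B. C \<in> S \<Longrightarrow> prime_ext ar K C B \<Longrightarrow> \<exists>C'. realization ar X C B C' \<and> C' \<in> S"
  shows "II_winning ar K X F (\<lambda>h. gpos ar X S F (rev h))"
proof -
  define \<sigma> where "\<sigma> = (\<lambda>h. gpos ar X S F (rev h))"
  have pp: "play_pos F \<sigma> bs n = gpos ar X S F (rev (map bs [0..<n]))" for bs n
    unfolding play_pos_def \<sigma>_def by auto
  have suc: "play_pos F \<sigma> bs (Suc n) =
     (SOME C. realization ar X (play_pos F \<sigma> bs n) (bs n) C \<and> C \<in> S)" for bs n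
    unfolding pp by simp
  have inS: "(\<forall>k<n. prime_ext ar K (play_pos F \<sigma> bs k) (bs k)) \<Longrightarrow> play_pos F \<sigma> bs n \<in> S" for bs n
  proof (induction n)
    case 0 then show ?case using FS unfolding play_pos_def by simp
  next
    case (Suc n)
    hence a: "play_pos F \<sigma> bs n \<in> S" by auto
    have "prime_ext ar K (play_pos F \<sigma> bs n) (bs n)" using Suc.prems by auto
    then obtain C' where "realization ar X (play_pos F \<sigma> bs n) (bs n) C' \<and> C' \<in> S"
      using cl[OF a] by blast
    then show ?case unfolding suc by (rule someI2) auto
  qed
  show ?thesis unfolding II_winning_def \<sigma>_def[symmetric]
  proof (intro allI impI)
    fix bs n assume leg: "\<forall>k\<le>n. prime_ext ar K (play_pos F \<sigma> bs k) (bs k)"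
    hence a: "play_pos F \<sigma> bs n \<in> S" using inS by auto
    have "prime_ext ar K (play_pos F \<sigma> bs n) (bs n)" using leg by auto
    then obtain C' where "realization ar X (play_pos F \<sigma> bs n) (bs n) C' \<and> C' \<in> S"
      using cl[OF a] by blast
    then show "realization ar X (play_pos F \<sigma> bs n) (bs n) (play_pos F \<sigma> bs (Suc n))"
      unfolding suc by (rule someI2) auto
  qed
qed


lemma bad_unique:
  fixes d1 d2 :: "'o::wellorder"
  assumes "d1 < x1" "rk_ge ar K X C d1" "\<not> rk_ge ar K X C (succ_o d1)"
    and "d2 < x2" "rk_ge ar K X C d2" "\<not> rk_ge ar K X C (succ_o d2)"
  shows "d1 = d2"
proof -
  have "\<not> d1 < d2" if "d1 < x1" "\<not> rk_ge ar K X C (succ_o d1)" "rk_ge ar K X C d2" for d1 d2 x1 :: 'o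
  proof
    assume "d1 < d2"
    hence "succ_o d1 \<le> d2" unfolding succ_o_def by (rule Least_le)
    thus False using rk_mono[OF that(3)] that(2) by blast
  qed
  hence "\<not> d1 < d2" and "\<not> d2 < d1"
    using assms by blast+
  thus ?thesis by simp
qed

lemma exists_good_delta:
  assumes unc: "\<not> countable (UNIV :: 'o::wellorder set)"
  shows "\<exists>d::'o. (\<exists>x. d < x) \<and>
     (\<forall>C\<in>age ar X. rk_ge ar K X C d \<longrightarrow> rk_ge ar K X C (succ_o d))"
proof (rule ccontr)
  assume nex: "\<not> ?thesis"
  define NM where "NM = {d::'o. \<exists>x. d < x}"
  define g where "g C = (SOME d::'o. (\<exists>x. d < x) \<and> rk_ge ar K X C d \<and> \<not> rk_ge ar K X C (succ_o d))" for C
  have "NM \<subseteq> g ` age ar X"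
  proof
    fix d assume "d \<in> NM"
    then obtain x where x: "d < x" unfolding NM_def by blast
    have "\<not> (\<forall>C\<in>age ar X. rk_ge ar K X C d \<longrightarrow> rk_ge ar K X C (succ_o d))"
      using nex x by blast
    then obtain C where C: "C \<in> age ar X" "rk_ge ar K X C d" "\<not> rk_ge ar K X C (succ_o d)"
      by blast
    have "(\<exists>x. g C < x) \<and> rk_ge ar K X C (g C) \<and> \<not> rk_ge ar K X C (succ_o (g C))"
      unfolding g_def by (rule someI[of _ d]) (intro conjI exI[of _ x] x C(2) C(3))
    hence "g C = d" using bad_unique[of "g C" _ ar K X C d x] x C by blast
    thus "d \<in> g ` age ar X" using C by blast
  qed
  hence cNM: "countable NM" by (rule countable_subset[OF _ countable_image[OF age_countable]])
  have cM: "countable (UNIV - NM)"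
  proof (cases "UNIV - NM = {}")
    case True then show ?thesis by (metis countable_empty)
  next
    case False
    then obtain m where m: "m \<in> UNIV - NM" by blast
    have "UNIV - NM \<subseteq> {m}"
    proof
      fix y assume "y \<in> UNIV - NM"
      hence "\<not> y < m" "\<not> m < y" using m unfolding NM_def by blast+
      thus "y \<in> {m}" by simp
    qed
    thus ?thesis by (rule countable_subset) simp
  qed
  have "countable (NM \<union> (UNIV - NM))" using cNM cM by (rule countable_Un)
  moreover have "NM \<union> (UNIV - NM) = UNIV" by blast
  ultimately show False using unc by simp
qed

theorem proposition2p6:
  fixes ar :: "'r::countable \<Rightarrow> nat" and K :: "'r struct set" and X F :: "'r struct"
  assumes "good_class ar K"
    and "\<not> countable (UNIV :: 'o::wellorder set)"
    and "X \<in> sigma_class ar K"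
    and "F \<in> age ar X"
  shows "rk_infinite ar K X F TYPE('o) \<longleftrightarrow> II_has_winning_strategy ar K X F"
proof
  assume "II_has_winning_strategy ar K X F"
  then obtain \<sigma> where "II_winning ar K X F \<sigma>" unfolding II_has_winning_strategy_def by blast
  thus "rk_infinite ar K X F TYPE('o)" unfolding rk_infinite_def using win_imp_rk by blast
next
  assume inf: "rk_infinite ar K X F TYPE('o)"
  obtain d :: 'o where dx: "\<exists>x. d < x"
    and P: "\<forall>C\<in>age ar X. rk_ge ar K X C d \<longrightarrow> rk_ge ar K X C (succ_o d)"
    using exists_good_delta[OF assms(2)] by blast
  define S where "S = {C \<in> age ar X. rk_ge ar K X C d}"
  have FS: "F \<in> S" using inf assms(4) unfolding S_def rk_infinite_def by blast
  have pd: "is_pred d (succ_o d)" using dx succ_pred by blast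
  have the: "(THE b. is_pred b (succ_o d)) = d" using pd by (rule pred_unique)
  have cl: "\<exists>C'. realization ar X C B C' \<and> C' \<in> S" if CS: "C \<in> S" and pB: "prime_ext ar K C B" for C B
  proof -
    have "rk_ge ar K X C (succ_o d)" using P CS unfolding S_def by blast
    hence "\<forall>B. prime_ext ar K C B \<longrightarrow> (\<exists>C'. realization ar X C B C' \<and> rk_ge ar K X C' d)"
    proof -
      have ex: "\<exists>b. is_pred b (succ_o d)" using pd by blast
      show ?thesis using \<open>rk_ge ar K X C (succ_o d)\<close>
        by (subst (asm) rk_ge.simps, simp only: ex the if_True)
    qed
    then obtain C' where r: "realization ar X C B C'" and rk: "rk_ge ar K X C' d" using pB by blast
    have BK: "B \<in> K" using pB unfolding prime_ext_def by simp
    hence fB: "finite (univ B)" using assms(1) unfolding good_class_def by blast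
    obtain f where "iso ar f B C'" using r unfolding realization_def by blast
    hence "bij_betw f (univ B) (univ C')" unfolding iso_def by simp
    hence "finite (univ C')" using fB bij_betw_finite by blast
    moreover have "substr ar C' X" using r unfolding realization_def by simp
    ultimately have "C' \<in> S" using rk unfolding S_def age_def by simp
    with r show ?thesis by blast
  qed
  have "II_winning ar K X F (\<lambda>h. gpos ar X S F (rev h))"
    by (rule closed_imp_win[OF FS cl])
  thus "II_has_winning_strategy ar K X F" unfolding II_has_winning_strategy_def by blast
qed

end
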